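(* Let $G=\mathrm{Cay}(\Gamma,S)$ be a Cayley graph with $D=|S|$. Then for every finite nonempty set $K\subset V$, $$\frac{|\partial_E K|}{D|K|}\geq\frac{1}{16\,\overline{R}(2|K|)},$$ with the convention $1/\infty=0$.
   Context: $S$ is a finite symmetric generating set of $\Gamma$, $V=\Gamma$, and $\partial_E K=\{\{x,y\}\in E: x\in K, y\notin K\}$ is the edge boundary. Define $\mathcal{B}(n)=\min_H|B_H(o,n)|$, where the minimum ranges over all Cayley graphs $H=\mathrm{Cay}(\Gamma',S')$ with $S'\subseteq S$ symmetric, $|S'|\ge |S|/2$, and $\Gamma'$ the subgroup of $\Gamma$ generated by $S'$; $B_H(o,n)$ is the ball of radius $n$ about the identity $o$ in $H$. Define $\overline{R}(m)=\min\{n\ge1:\mathcal{B}(n)\ge m\}$, with $\overline{R}(m)=\infty$ if $\mathcal{B}(n)<m$ for all $n\ge1$. *)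

theory Defs
  imports "HOL-Algebra.Generated_Groups" "HOL-Library.Extended_Nat" Complex_Main
begin

definition symmetric_set :: "('a, 'b) monoid_scheme \<Rightarrow> 'a set \<Rightarrow> bool" where
  "symmetric_set G S \<longleftrightarrow> (\<forall>s\<in>S. inv\<^bsub>G\<^esub> s \<in> S)"

definition cay_edges :: "('a, 'b) monoid_scheme \<Rightarrow> 'a set \<Rightarrow> 'a set set" where
  "cay_edges G S = {{x, x \<otimes>\<^bsub>G\<^esub> s} | x s. x \<in> carrier G \<and> s \<in> S}"

definition edge_boundary :: "('a, 'b) monoid_scheme \<Rightarrow> 'a set \<Rightarrow> 'a set \<Rightarrow> 'a set set" where
  "edge_boundary G S K = {e \<in> cay_edges G S. \<exists>x y. e = {x, y} \<and> x \<in> K \<and> y \<notin> K}"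

text \<open>Ball of radius n about the identity in the Cayley graph of the subgroup generated by S'
  (word metric: products of at most n generators).\<close>
definition cay_ball :: "('a, 'b) monoid_scheme \<Rightarrow> 'a set \<Rightarrow> nat \<Rightarrow> 'a set" where
  "cay_ball G S' n = {foldr (\<otimes>\<^bsub>G\<^esub>) xs \<one>\<^bsub>G\<^esub> | xs. set xs \<subseteq> S' \<and> length xs \<le> n}"

definition calB :: "('a, 'b) monoid_scheme \<Rightarrow> 'a set \<Rightarrow> nat \<Rightarrow> nat" where
  "calB G S n = Min {card (cay_ball G S' n) | S'. S' \<subseteq> S \<and> symmetric_set G S' \<and> 2 * card S' \<ge> card S}"

definition Rbar :: "('a, 'b) monoid_scheme \<Rightarrow> 'a set \<Rightarrow> nat \<Rightarrow> enat" where
  "Rbar G S m = (if \<exists>n\<ge>1. calB G S n \<ge> m then enat (LEAST n. n \<ge> 1 \<and> calB G S n \<ge> m) else \<infinity>)"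

definition inv16 :: "enat \<Rightarrow> real" where
  "inv16 r = (case r of enat k \<Rightarrow> 1 / (16 * real k) | \<infinity> \<Rightarrow> 0)"

end

theory Submission imports Defs begin

context group begin

lemma word_bound:
  assumes "set xs \<subseteq> carrier G" "K \<subseteq> carrier G" "finite K"
  shows "card {x\<in>K. x \<otimes> foldr (\<otimes>) xs \<one> \<notin> K} \<le> sum_list (map (\<lambda>s. card {y\<in>K. y \<otimes> s \<notin> K}) xs)"
  using assms(1)
proof (induction xs)
  case Nil
  have "{x\<in>K. x \<otimes> foldr (\<otimes>) [] \<one> \<notin> K} = {}" using assms(2) by auto
  then show ?case by (metis card.empty le_refl list.map(1) sum_list.Nil)
next
  case (Cons s xs)
  define g where "g = foldr (\<otimes>) xs \<one>"
  have sc: "s \<in> carrier G" using Cons by auto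
  have gc: "g \<in> carrier G" unfolding g_def using Cons.prems
    by (induction xs) auto
  have IH: "card {x\<in>K. x \<otimes> g \<notin> K} \<le> sum_list (map (\<lambda>s. card {y\<in>K. y \<otimes> s \<notin> K}) xs)"
    using Cons g_def by auto
  have sub: "{x\<in>K. x \<otimes> foldr (\<otimes>) (s#xs) \<one> \<notin> K} \<subseteq> {x\<in>K. x \<otimes> s \<notin> K} \<union> {x\<in>K. x \<otimes> s \<in> K \<and> (x \<otimes> s) \<otimes> g \<notin> K}"
    using assms(2) sc gc by (auto simp: g_def m_assoc)
  have inj: "inj_on (\<lambda>x. x \<otimes> s) {x\<in>K. x \<otimes> s \<in> K \<and> (x \<otimes> s) \<otimes> g \<notin> K}"
    using assms(2) sc by (auto simp: inj_on_def) (metis right_cancel subsetD)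
  have "card {x\<in>K. x \<otimes> s \<in> K \<and> (x \<otimes> s) \<otimes> g \<notin> K} \<le> card {x\<in>K. x \<otimes> g \<notin> K}"
    by (rule card_inj_on_le[OF inj]) (use assms(3) in auto)
  moreover have "card {x\<in>K. x \<otimes> foldr (\<otimes>) (s#xs) \<one> \<notin> K} \<le> card {x\<in>K. x \<otimes> s \<notin> K} + card {x\<in>K. x \<otimes> s \<in> K \<and> (x \<otimes> s) \<otimes> g \<notin> K}"
    by (rule order_trans[OF card_mono[OF _ sub] card_Un_le]) (use assms(3) in auto)
  ultimately show ?case using IH by simp
qed

lemma lcanc: "x \<in> carrier G \<Longrightarrow> a \<in> carrier G \<Longrightarrow> b \<in> carrier G \<Longrightarrow> x \<otimes> a = x \<otimes> b \<Longrightarrow> a = b"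
  by (metis inv_closed l_inv l_one m_assoc)

lemma foldr_carrier: "set xs \<subseteq> carrier G \<Longrightarrow> foldr (\<otimes>) xs \<one> \<in> carrier G"
  by (induction xs) auto

lemma card_split: "finite K \<Longrightarrow> card {y\<in>K. P y} + card {y\<in>K. \<not> P y} = card K"
proof -
  assume f: "finite K"
  have "card ({y\<in>K. P y} \<union> {y\<in>K. \<not> P y}) = card {y\<in>K. P y} + card {y\<in>K. \<not> P y}"
    by (rule card_Un_disjoint) (use f in auto)
  moreover have "{y\<in>K. P y} \<union> {y\<in>K. \<not> P y} = K" by auto
  ultimately show ?thesis by simp
qed

lemma in_le:
  assumes "s \<in> carrier G" "K \<subseteq> carrier G" "finite K"
  shows "card {y\<in>K. y \<otimes> s \<in> K} \<le> card {y\<in>K. y \<otimes> inv s \<in> K}"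
proof (rule card_inj_on_le[where f="\<lambda>y. y \<otimes> s"])
  show "inj_on (\<lambda>y. y \<otimes> s) {y \<in> K. y \<otimes> s \<in> K}" using assms by (auto simp: inj_on_def) (metis right_cancel subsetD)
  show "(\<lambda>y. y \<otimes> s) ` {y \<in> K. y \<otimes> s \<in> K} \<subseteq> {y \<in> K. y \<otimes> inv s \<in> K}"
    using assms by (auto simp: m_assoc)
  show "finite {y \<in> K. y \<otimes> inv s \<in> K}" using assms by auto
qed

lemma N_sym:
  assumes "s \<in> carrier G" "K \<subseteq> carrier G" "finite K"
  shows "card {y\<in>K. y \<otimes> inv s \<notin> K} = card {y\<in>K. y \<otimes> s \<notin> K}"
proof -
  have a: "card {y\<in>K. y \<otimes> s \<in> K} \<le> card {y\<in>K. y \<otimes> inv s \<in> K}" using in_le assms by blast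
  have b: "card {y\<in>K. y \<otimes> inv s \<in> K} \<le> card {y\<in>K. y \<otimes> s \<in> K}" using in_le[of "inv s"] assms by simp
  have "card {y\<in>K. y \<otimes> s \<in> K} + card {y\<in>K. y \<otimes> s \<notin> K} = card K" by (rule card_split[OF assms(3)])
  moreover have "card {y\<in>K. y \<otimes> inv s \<in> K} + card {y\<in>K. y \<otimes> inv s \<notin> K} = card K" by (rule card_split[OF assms(3)])
  ultimately show ?thesis using a b by linarith
qed


lemma sum_list_bound:
  assumes "\<forall>s\<in>set xs. f s * c \<le> (M::nat)"
  shows "sum_list (map f xs) * c \<le> length xs * M"
  using assms by (induction xs) (auto simp: algebra_simps)

lemma card_boole: "card {x\<in>K. P x} = (\<Sum>x\<in>K. if P x then 1 else (0::nat))" if "finite K" for K P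
  using that by (simp add: sum.If_cases Int_def)

end

theorem lemma3p4:
  fixes G :: "('a, 'b) monoid_scheme" and S K :: "'a set"
  assumes "group G"
    and "S \<subseteq> carrier G" and "finite S" and "symmetric_set G S"
    and "generate G S = carrier G"
    and "K \<subseteq> carrier G" and "finite K" and "K \<noteq> {}"
  shows "real (card (edge_boundary G S K)) / (real (card S) * real (card K))
           \<ge> inv16 (Rbar G S (2 * card K))"
proof (cases "\<exists>n\<ge>1. calB G S n \<ge> 2 * card K")
  case False
  then have "Rbar G S (2 * card K) = \<infinity>" unfolding Rbar_def by auto
  then show ?thesis by (simp add: inv16_def)
next
  case True
  interpret group G by fact
  note SC = assms(2) and fS = assms(3) and KC = assms(6) and fK = assms(7)
  define n where "n = (LEAST n. n \<ge> 1 \<and> calB G S n \<ge> 2 * card K)"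
  have ex: "\<exists>n. n \<ge> 1 \<and> calB G S n \<ge> 2 * card K" using True by auto
  have n1: "n \<ge> 1" and cn: "calB G S n \<ge> 2 * card K"
    using LeastI_ex[OF ex] unfolding n_def by auto
  have Rn: "Rbar G S (2 * card K) = enat n" using True by (simp add: Rbar_def n_def)
  define N where "N s = card {y\<in>K. y \<otimes>\<^bsub>G\<^esub> s \<notin> K}" for s
  define \<Sigma> where "\<Sigma> = sum N S"
  define S' where "S' = {s\<in>S. N s * card S \<le> 2 * \<Sigma>}"
  have S'S: "S' \<subseteq> S" by (auto simp: S'_def)
  have symS': "symmetric_set G S'"
  proof -
    have "N (inv\<^bsub>G\<^esub> s) = N s" if "s \<in> S" for s
      unfolding N_def using N_sym[OF _ KC fK] that SC by auto
    then show ?thesis using assms(4) unfolding symmetric_set_def S'_def by auto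
  qed
  have halfS': "2 * card S' \<ge> card S"
  proof -
    define T where "T = S - S'"
    have cT: "card S = card S' + card T" unfolding T_def
      using card_Diff_subset[OF finite_subset[OF S'S fS] S'S] card_mono[OF fS S'S] by simp
    show ?thesis
    proof (cases "T = {}")
      case True then show ?thesis using cT by simp
    next
      case False
      have fT: "finite T" using fS T_def by simp
      have "(\<Sum>s\<in>T. 2 * \<Sigma>) < (\<Sum>s\<in>T. N s * card S)"
        by (rule sum_strict_mono[OF fT False]) (auto simp: T_def S'_def)
      also have "\<dots> \<le> (\<Sum>s\<in>S. N s * card S)"
        by (rule sum_mono2[OF fS]) (auto simp: T_def)
      also have "\<dots> = \<Sigma> * card S" by (simp add: \<Sigma>_def sum_distrib_right)
      finally have lt: "card T * (2 * \<Sigma>) < \<Sigma> * card S" by simp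
      have "2 * card T < card S"
      proof (rule ccontr)
        assume "\<not> 2 * card T < card S"
        then have "\<Sigma> * card S \<le> \<Sigma> * (2 * card T)" by simp
        then show False using lt by (simp add: algebra_simps)
      qed
      then show ?thesis using cT by simp
    qed
  qed
  define B where "B = cay_ball G S' n"
  have "calB G S n \<le> card B"
  proof -
    have fin: "finite {card (cay_ball G S' n) | S'. S' \<subseteq> S \<and> symmetric_set G S' \<and> 2 * card S' \<ge> card S}"
    proof (rule finite_subset[of _ "(\<lambda>S'. card (cay_ball G S' n)) ` Pow S"])
      show "finite ((\<lambda>S'. card (cay_ball G S' n)) ` Pow S)" using fS by simp
    qed auto
    show ?thesis unfolding calB_def B_def
      by (rule Min_le[OF fin]) (use S'S symS' halfS' in blast)
  qed
  with cn have cB: "card B \<ge> 2 * card K" by simp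
  have cK: "card K > 0" using fK assms(8) by auto
  have "card B > 0" using cB cK by linarith
  then have fB: "finite B" by (simp add: card_gt_0_iff)
  have BC: "B \<subseteq> carrier G" unfolding B_def cay_ball_def using S'S SC foldr_carrier by blast
  have "S' \<noteq> {}"
  proof
    assume "S' = {}"
    then have "B = {\<one>\<^bsub>G\<^esub>}" unfolding B_def cay_ball_def by auto
    then show False using cB cK by simp
  qed
  then have "S \<noteq> {}" using S'S by blast
  then have cS: "card S > 0" using fS by (simp add: card_gt_0_iff)
  have "\<exists>g\<in>B. card K \<le> 2 * N g"
  proof (rule ccontr)
    assume nt: "\<not> ?thesis"
    have lt: "\<forall>g\<in>B. card K < 2 * card {x\<in>K. x \<otimes>\<^bsub>G\<^esub> g \<in> K}"
    proof
      fix g assume "g \<in> B"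
      then have "\<not> card K \<le> 2 * card {y \<in> K. y \<otimes>\<^bsub>G\<^esub> g \<notin> K}" using nt unfolding N_def by blast
      moreover have "card {y \<in> K. y \<otimes>\<^bsub>G\<^esub> g \<in> K} + card {y \<in> K. y \<otimes>\<^bsub>G\<^esub> g \<notin> K} = card K"
        by (rule card_split[OF fK])
      ultimately show "card K < 2 * card {x\<in>K. x \<otimes>\<^bsub>G\<^esub> g \<in> K}" by linarith
    qed
    have "(\<Sum>g\<in>B. card K) < (\<Sum>g\<in>B. 2 * card {x\<in>K. x \<otimes>\<^bsub>G\<^esub> g \<in> K})"
    proof (rule sum_strict_mono[OF fB])
      show "B \<noteq> {}" using cB cK by auto
    qed (use lt in auto)
    also have "\<dots> = 2 * (\<Sum>g\<in>B. \<Sum>x\<in>K. if x \<otimes>\<^bsub>G\<^esub> g \<in> K then 1 else 0)"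
      by (simp add: sum_distrib_left card_boole[OF fK])
    also have "\<dots> = 2 * (\<Sum>x\<in>K. \<Sum>g\<in>B. if x \<otimes>\<^bsub>G\<^esub> g \<in> K then 1 else 0)"
      by (simp add: sum.swap[of _ B])
    also have "\<dots> = 2 * (\<Sum>x\<in>K. card {g\<in>B. x \<otimes>\<^bsub>G\<^esub> g \<in> K})"
      by (simp add: card_boole[OF fB])
    also have "\<dots> \<le> 2 * (\<Sum>x\<in>K. card K)"
    proof -
      have "card {g\<in>B. x \<otimes>\<^bsub>G\<^esub> g \<in> K} \<le> card K" if "x \<in> K" for x
      proof (rule card_inj_on_le[where f="\<lambda>g. x \<otimes>\<^bsub>G\<^esub> g"])
        show "inj_on ((\<otimes>\<^bsub>G\<^esub>) x) {g \<in> B. x \<otimes>\<^bsub>G\<^esub> g \<in> K}"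
          using BC KC that by (auto simp: inj_on_def) (meson lcanc subsetD)
      qed (use fK in auto)
      then have "(\<Sum>x\<in>K. card {g\<in>B. x \<otimes>\<^bsub>G\<^esub> g \<in> K}) \<le> (\<Sum>x\<in>K. card K)" by (rule sum_mono)
      then show ?thesis by simp
    qed
    finally have "card B * card K < 2 * (card K * card K)" by simp
    moreover have "2 * card K * card K \<le> card B * card K" using cB by simp
    ultimately show False by simp
  qed
  then obtain g where gB: "g \<in> B" and gN: "card K \<le> 2 * N g" by blast
  then obtain xs where xs: "set xs \<subseteq> S'" "length xs \<le> n" "g = foldr (\<otimes>\<^bsub>G\<^esub>) xs \<one>\<^bsub>G\<^esub>"
    unfolding B_def cay_ball_def by auto
  have "N g \<le> sum_list (map N xs)"
    unfolding N_def xs(3) by (rule word_bound) (use xs S'S SC KC fK in auto)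
  moreover have "sum_list (map N xs) * card S \<le> length xs * (2 * \<Sigma>)"
    by (rule sum_list_bound) (use xs in \<open>auto simp: S'_def\<close>)
  ultimately have a: "N g * card S \<le> length xs * (2 * \<Sigma>)"
    using mult_le_mono1 order_trans by blast
  have b: "length xs * (2 * \<Sigma>) \<le> n * (2 * \<Sigma>)" using xs(2) by (rule mult_le_mono1)
  have c: "N g * card S \<le> n * (2 * \<Sigma>)" using a b by (rule order_trans)
  have "card K * card S \<le> (2 * N g) * card S" using gN by (rule mult_le_mono1)
  also have "\<dots> = 2 * (N g * card S)" by simp
  also have "\<dots> \<le> 2 * (n * (2 * \<Sigma>))" using c by (rule mult_le_mono2)
  also have "\<dots> = 4 * n * \<Sigma>" by simp
  finally have main: "card K * card S \<le> 4 * n * \<Sigma>" .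
  define P where "P = (SIGMA s:S. {y\<in>K. y \<otimes>\<^bsub>G\<^esub> s \<notin> K})"
  have cP: "card P = \<Sigma>" unfolding P_def \<Sigma>_def N_def using fS fK by simp
  have Psub: "edge_boundary G S K \<subseteq> (\<lambda>(y,s). {y, y \<otimes>\<^bsub>G\<^esub> s}) ` (K \<times> S)"
  proof
    fix e assume "e \<in> edge_boundary G S K"
    then obtain x s a b where e: "e = {x, x \<otimes>\<^bsub>G\<^esub> s}" "x \<in> carrier G" "s \<in> S" "e = {a, b}" "a \<in> K" "b \<notin> K"
      unfolding edge_boundary_def cay_edges_def by blast
    show "e \<in> (\<lambda>(y,s). {y, y \<otimes>\<^bsub>G\<^esub> s}) ` (K \<times> S)"
    proof (cases "x = a")
      case True then show ?thesis using e by force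
    next
      case False
      then have "x = b" "x \<otimes>\<^bsub>G\<^esub> s = a" using e by (auto simp: doubleton_eq_iff)
      moreover have "inv\<^bsub>G\<^esub> s \<in> S" using assms(4) e(3) unfolding symmetric_set_def by blast
      moreover have "a \<otimes>\<^bsub>G\<^esub> inv\<^bsub>G\<^esub> s = x" using calculation e SC by (auto simp: m_assoc)
      ultimately have "e = (\<lambda>(y,s). {y, y \<otimes>\<^bsub>G\<^esub> s}) (a, inv\<^bsub>G\<^esub> s)" using e by auto
      then show ?thesis using e \<open>inv\<^bsub>G\<^esub> s \<in> S\<close> by blast
    qed
  qed
  have fE: "finite (edge_boundary G S K)"
    by (rule finite_subset[OF Psub]) (use fS fK in simp)
  have "card P \<le> card (edge_boundary G S K)"
  proof (rule card_inj_on_le[where f="\<lambda>(s,y). {y, y \<otimes>\<^bsub>G\<^esub> s}"])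
    show "inj_on (\<lambda>(s,y). {y, y \<otimes>\<^bsub>G\<^esub> s}) P"
    proof (rule inj_onI, clarsimp simp: P_def)
      fix s y s' y'
      assume h: "s \<in> S" "y \<in> K" "y \<otimes>\<^bsub>G\<^esub> s \<notin> K" "s' \<in> S" "y' \<in> K" "y' \<otimes>\<^bsub>G\<^esub> s' \<notin> K"
        "{y, y \<otimes>\<^bsub>G\<^esub> s} = {y', y' \<otimes>\<^bsub>G\<^esub> s'}"
      then have "y = y'" by (auto simp: doubleton_eq_iff)
      moreover then have "y \<otimes>\<^bsub>G\<^esub> s = y \<otimes>\<^bsub>G\<^esub> s'" using h by (auto simp: doubleton_eq_iff)
      ultimately show "s = s' \<and> y = y'" using h SC KC
        by (meson lcanc subsetD)
    qed
    show "(\<lambda>(s,y). {y, y \<otimes>\<^bsub>G\<^esub> s}) ` P \<subseteq> edge_boundary G S K"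
      unfolding P_def
    proof clarsimp
      fix s y assume h: "s \<in> S" "y \<in> K" "y \<otimes>\<^bsub>G\<^esub> s \<notin> K"
      have "{y, y \<otimes>\<^bsub>G\<^esub> s} \<in> cay_edges G S" unfolding cay_edges_def using h KC by blast
      then show "{y, y \<otimes>\<^bsub>G\<^esub> s} \<in> edge_boundary G S K" unfolding edge_boundary_def using h by blast
    qed
  qed (rule fE)
  with cP have SE: "\<Sigma> \<le> card (edge_boundary G S K)" by simp
  have "4 * n * \<Sigma> \<le> 4 * n * card (edge_boundary G S K)" using SE by (rule mult_le_mono2)
  with main have "card K * card S \<le> 4 * n * card (edge_boundary G S K)" by (rule order_trans)
  moreover have "4 * n * card (edge_boundary G S K) \<le> 16 * n * card (edge_boundary G S K)" by simp
  ultimately have "card K * card S \<le> 16 * n * card (edge_boundary G S K)" by (rule order_trans)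
  then have "real (card K * card S) \<le> real (16 * n * card (edge_boundary G S K))"
    by (simp only: of_nat_le_iff)
  then have ineq: "real (card S) * real (card K) \<le> 16 * real n * real (card (edge_boundary G S K))"
    by (simp add: algebra_simps)
  have pos: "real (card S) * real (card K) > 0" using cS cK by simp
  have "1 / (16 * real n) \<le> real (card (edge_boundary G S K)) / (real (card S) * real (card K))"
    using n1 pos ineq by (simp add: divide_simps) (simp add: algebra_simps)
  then show ?thesis by (simp add: Rn inv16_def)
qed

end
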